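(* Let $K$ be an idempotent, linearly ordered, archimedian, cancellative, commutative semiring. Let $u,q\in K$, $S=u(qX)^*$, let $r\geq1$, $u_1,\dots,u_r,q_1,\dots,q_r\in K$, $T_i=u_i(q_iX)^*$ and $T=\bigoplus_{1\leq i\leq r}T_i$. Then $T=S$ if and only if $T_i\leq S$ for all $1\leq i\leq r$ and $T_j=S$ for some $1\leq j\leq r$.
   Context: Semiring notions: idempotent ($u\oplus u=u$), linearly ordered ($u\leq v\iff u\oplus v=v$ is a total order), archimedian (for all $u,v,\lambda,\mu$: $u\lambda^k\geq v\mu^k$ for all $k\ge0$ implies $v=\mathbb{0}$ or $\lambda\geq\mu$), cancellative ($uv=u'v$ implies $v=\mathbb{0}$ or $u=u'$). For $a\in K$, $(aX)^*=\bigoplus_{k\ge0}a^kX^k\in K[[X]]$; series are added coefficientwise and ordered coefficientwise ($S\leq T$ iff $S\oplus T=T$). *)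

theory Defs
  imports "HOL-Computational_Algebra.Formal_Power_Series"
begin

definition sr_le :: "'a::comm_semiring_1 \<Rightarrow> 'a \<Rightarrow> bool" where
  "sr_le u v \<longleftrightarrow> u + v = v"

definition sr_idempotent :: "'a::comm_semiring_1 itself \<Rightarrow> bool" where
  "sr_idempotent _ \<longleftrightarrow> (\<forall>u::'a. u + u = u)"

definition sr_linear :: "'a::comm_semiring_1 itself \<Rightarrow> bool" where
  "sr_linear _ \<longleftrightarrow> (\<forall>u v::'a. sr_le u v \<or> sr_le v u)"

definition sr_archimedian :: "'a::comm_semiring_1 itself \<Rightarrow> bool" where
  "sr_archimedian _ \<longleftrightarrow> (\<forall>u v l m::'a.
     (\<forall>k::nat. sr_le (v * m ^ k) (u * l ^ k)) \<longrightarrow> v = 0 \<or> sr_le m l)"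

definition sr_cancellative :: "'a::comm_semiring_1 itself \<Rightarrow> bool" where
  "sr_cancellative _ \<longleftrightarrow> (\<forall>u u' v::'a. u * v = u' * v \<longrightarrow> v = 0 \<or> u = u')"

text \<open>(aX)^* = sum over k of a^k X^k.\<close>
definition star_X :: "'a::comm_semiring_1 \<Rightarrow> 'a fps" where
  "star_X a = Abs_fps (\<lambda>k. a ^ k)"

definition fps_sr_le :: "'a::comm_semiring_1 fps \<Rightarrow> 'a fps \<Rightarrow> bool" where
  "fps_sr_le S T \<longleftrightarrow> S + T = T"

end

theory Submission
  imports Defs
begin

lemma coef: "fps_nth (fps_const c * star_X a) k = c * a ^ k"
  by (simp add: star_X_def)

lemma sum_attained:
  fixes f :: "nat \<Rightarrow> 'a::comm_semiring_1"
  assumes lin: "\<And>x y::'a. x + y = y \<or> y + x = x"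
    and "finite A" "A \<noteq> {}"
  shows "\<exists>i\<in>A. sum f A = f i"
  using assms(2,3)
proof (induction A rule: finite_ne_induct)
  case (singleton x) then show ?case by simp
next
  case (insert x F)
  then obtain i where i: "i \<in> F" "sum f F = f i" by blast
  have "sum f (insert x F) = f x + f i" using insert i by simp
  then show ?case using lin[of "f x" "f i"] i by (auto simp: add.commute)
qed

lemma sum_le:
  fixes f :: "nat \<Rightarrow> 'a::comm_semiring_1"
  assumes "finite A" "\<And>i. i \<in> A \<Longrightarrow> f i + s = s"
  shows "sum f A + s = s"
  using assms
proof (induction A rule: finite_induct)
  case empty then show ?case by simp
next
  case (insert x F)
  then have "sum f (insert x F) + s = f x + (sum f F + s)" by (simp add: add.assoc)
  also have "\<dots> = s" using insert by simp
  finally show ?case .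
qed

theorem lemma7:
  fixes u q :: "'a::comm_semiring_1" and us qs :: "nat \<Rightarrow> 'a" and r :: nat
  assumes "sr_idempotent TYPE('a)" and "sr_linear TYPE('a)"
    and "sr_archimedian TYPE('a)" and "sr_cancellative TYPE('a)"
    and "r \<ge> 1"
  shows "(\<Sum>i\<in>{1..r}. fps_const (us i) * star_X (qs i)) = fps_const u * star_X q
     \<longleftrightarrow> (\<forall>i\<in>{1..r}. fps_sr_le (fps_const (us i) * star_X (qs i)) (fps_const u * star_X q))
         \<and> (\<exists>j\<in>{1..r}. fps_const (us j) * star_X (qs j) = fps_const u * star_X q)"
proof -
  have idem: "\<And>x::'a. x + x = x" using assms(1) by (simp add: sr_idempotent_def)
  have lin: "\<And>x y::'a. x + y = y \<or> y + x = x" using assms(2) by (simp add: sr_linear_def sr_le_def)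
  have canc: "\<And>x y z::'a. x * z = y * z \<Longrightarrow> z = 0 \<or> x = y"
    using assms(4) by (simp add: sr_cancellative_def)
  have nzd: "\<And>x y::'a. x * y = 0 \<Longrightarrow> x = 0 \<or> y = 0"
    proof - fix x y :: 'a assume "x * y = 0" then have "x * y = 0 * y" by simp then show "x = 0 \<or> y = 0" using canc by blast qed
  have pownz: "\<And>x::'a. \<And>n. x \<noteq> 0 \<Longrightarrow> x ^ n \<noteq> 0"
  proof -
    fix x :: 'a and n :: nat assume "x \<noteq> 0" then show "x ^ n \<noteq> 0"
      by (induction n) (auto dest: nzd)
  qed
  have mono: "\<And>a b c::'a. a + b = b \<Longrightarrow> a * c + b * c = b * c"
    by (metis distrib_right)
  have pmono: "\<And>a b::'a. \<And>n. a + b = b \<Longrightarrow> a ^ n + b ^ n = b ^ n"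
  proof -
    fix a b :: 'a and n :: nat assume ab: "a + b = b"
    show "a ^ n + b ^ n = b ^ n"
    proof (induction n)
      case 0 then show ?case using idem by simp
    next
      case (Suc n)
      have "a * a ^ n + b * a ^ n = b * a ^ n" using mono[OF ab] .
      moreover have "b * a ^ n + b * b ^ n = b * b ^ n"
        using mono[OF Suc] by (simp add: mult.commute)
      ultimately show ?case by (metis add.assoc power_Suc)
    qed
  qed
  have antisym: "\<And>x y::'a. x + y = y \<Longrightarrow> y + x = x \<Longrightarrow> x = y" by (metis add.commute)
  have trans: "\<And>x y z::'a. x + y = y \<Longrightarrow> y + z = z \<Longrightarrow> x + z = z" by (metis add.assoc)
  have key: "\<And>a b k1 k2. u \<noteq> 0 \<Longrightarrow> q \<noteq> 0 \<Longrightarrow> k1 < k2 \<Longrightarrow> a * b ^ k1 = u * q ^ k1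
      \<Longrightarrow> a * b ^ k2 = u * q ^ k2 \<Longrightarrow> a = u \<and> b = q"
  proof -
    fix a b :: 'a and k1 k2 :: nat
    assume u0: "u \<noteq> 0" and q0: "q \<noteq> 0" and lt: "k1 < k2"
      and e1: "a * b ^ k1 = u * q ^ k1" and e2: "a * b ^ k2 = u * q ^ k2"
    obtain e where d: "k2 = k1 + Suc e" using less_imp_Suc_add[OF lt] by auto
    have uq: "u * q ^ k1 \<noteq> 0" using u0 q0 pownz nzd by blast
    have x1: "a * b ^ k2 = (a * b ^ k1) * b ^ Suc e" using d by (simp only: power_add mult.assoc)
    have x2: "u * q ^ k2 = (u * q ^ k1) * q ^ Suc e" using d by (simp only: power_add mult.assoc)
    have "(b ^ Suc e) * (u * q ^ k1) = (q ^ Suc e) * (u * q ^ k1)"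
      using x1 x2 e1 e2 by (simp add: mult.commute)
    then have pe: "b ^ Suc e = q ^ Suc e" using canc uq by blast
    have qe: "q ^ Suc e \<noteq> 0" using pownz q0 by blast
    have beq: "b = q"
    proof (cases "b + q = q")
      case True
      have s1: "b ^ Suc e + b * q ^ e = b * q ^ e"
        using mono[OF pmono[OF True, of e], of b] by (simp add: mult.commute)
      have s2: "b * q ^ e + q * q ^ e = q * q ^ e" using mono[OF True] .
      have "b * q ^ e = q * q ^ e"
        using antisym[OF s2] trans[OF s2] s1 pe by (metis power_Suc add.commute)
      moreover have "q ^ e \<noteq> 0" using pownz q0 by blast
      ultimately show ?thesis using canc by blast
    next
      case False
      then have True': "q + b = b" using lin by (metis add.commute)
      have b0: "b \<noteq> 0" using pe qe by (metis pownz power_0_Suc zero_power)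
      have s1: "q ^ Suc e + q * b ^ e = q * b ^ e"
        using mono[OF pmono[OF True', of e], of q] by (simp add: mult.commute)
      have s2: "q * b ^ e + b * b ^ e = b * b ^ e" using mono[OF True'] .
      have "q * b ^ e = b * b ^ e"
        using antisym[OF s2] s1 pe by (metis power_Suc add.commute)
      moreover have "b ^ e \<noteq> 0" using pownz b0 by blast
      ultimately show ?thesis using canc by metis
    qed
    have "q ^ k1 \<noteq> 0" using pownz q0 by blast
    then have "a = u" using e1 beq canc by blast
    then show "a = u \<and> b = q" using beq by simp
  qed
  let ?T = "\<lambda>i. fps_const (us i) * star_X (qs i)"
  let ?S = "fps_const u * star_X q"
  have Tc: "\<And>k. fps_nth (\<Sum>i\<in>{1..r}. ?T i) k = (\<Sum>i\<in>{1..r}. us i * qs i ^ k)"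
    by (simp add: fps_sum_nth coef star_X_def)
  show ?thesis
  proof
    assume eq: "(\<Sum>i\<in>{1..r}. ?T i) = ?S"
    have ck: "\<And>k. (\<Sum>i\<in>{1..r}. us i * qs i ^ k) = u * q ^ k"
      using arg_cong[OF eq, of "\<lambda>F. fps_nth F _"] Tc coef by metis
    have le: "\<forall>i\<in>{1..r}. fps_sr_le (?T i) ?S"
    proof
      fix i assume i: "i \<in> {1..r}"
      have "?T i + ?S = ?S"
      proof (rule fps_ext)
        fix k
        have "us i * qs i ^ k + (\<Sum>i\<in>{1..r}. us i * qs i ^ k) = (\<Sum>i\<in>{1..r}. us i * qs i ^ k)"
          using i idem by (metis (no_types, lifting) add.assoc finite_atLeastAtMost sum.remove)
        then show "fps_nth (?T i + ?S) k = fps_nth ?S k" using ck by (simp add: coef star_X_def)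
      qed
      then show "fps_sr_le (?T i) ?S" by (simp add: fps_sr_le_def)
    qed
    have ex: "\<exists>j\<in>{1..r}. ?T j = ?S"
    proof (cases "u = 0")
      case True
      have "?T 1 = ?S"
      proof (rule fps_ext)
        fix k
        have "us 1 * qs 1 ^ k + u * q ^ k = u * q ^ k"
          using le assms(5) unfolding fps_sr_le_def
          by (metis atLeastAtMost_iff coef fps_add_nth order_refl)
        then show "fps_nth (?T 1) k = fps_nth ?S k" using True by (simp add: coef star_X_def)
      qed
      then show ?thesis using assms(5) by auto
    next
      case u0: False
      show ?thesis
      proof (cases "q = 0")
        case True
        obtain j where j: "j \<in> {1..r}" "us j * qs j ^ 0 = u * q ^ 0"
          using sum_attained[OF lin, of "{1..r}" "\<lambda>i. us i * qs i ^ 0"] assms(5) ck[of 0] by auto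
        have "?T j = ?S"
        proof (rule fps_ext)
          fix k
          show "fps_nth (?T j) k = fps_nth ?S k"
          proof (cases k)
            case 0 then show ?thesis using j by (simp add: coef star_X_def)
          next
            case (Suc m)
            have "us j * qs j ^ k + u * q ^ k = u * q ^ k"
              using le j unfolding fps_sr_le_def by (metis coef fps_add_nth)
            then have z: "us j * qs j ^ k = 0" using True Suc by simp
            have "qs j = 0" using z j u0 nzd Suc by (metis pownz power_0 mult_1_right)
            then show ?thesis using True Suc by (simp add: coef star_X_def)
          qed
        qed
        then show ?thesis using j by auto
      next
        case q0: False
        have "\<forall>k. \<exists>i\<in>{1..r}. (\<Sum>i\<in>{1..r}. us i * qs i ^ k) = us i * qs i ^ k"
          using sum_attained[OF lin] assms(5) by auto
        then obtain f where f: "\<And>k. f k \<in> {1..r} \<and> u * q ^ k = us (f k) * qs (f k) ^ k"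
          using ck by metis
        have "\<not> inj_on f {0..r}"
        proof
          assume "inj_on f {0..r}"
          moreover have "f ` {0..r} \<subseteq> {1..r}" using f by auto
          ultimately have "card {0..r} \<le> card {1..r}" by (metis card_inj_on_le finite_atLeastAtMost)
          then show False by simp
        qed
        then obtain k1 k2 where "k1 \<noteq> k2" "f k1 = f k2" unfolding inj_on_def by blast
        then obtain a b where ab: "a < b" "f a = f b"
          by (metis linorder_neqE_nat)
        have "us (f a) = u \<and> qs (f a) = q"
          using key[OF u0 q0 ab(1)] f[of a] f[of b] ab(2) by metis
        then show ?thesis using f[of a] by auto
      qed
    qed
    show "(\<forall>i\<in>{1..r}. fps_sr_le (?T i) ?S) \<and> (\<exists>j\<in>{1..r}. ?T j = ?S)" using le ex by blast
  next
    assume h: "(\<forall>i\<in>{1..r}. fps_sr_le (?T i) ?S) \<and> (\<exists>j\<in>{1..r}. ?T j = ?S)"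
    then obtain j where j: "j \<in> {1..r}" "?T j = ?S" by blast
    have rest: "(\<Sum>i\<in>{1..r} - {j}. ?T i) + ?S = ?S"
      by (rule sum_le) (use h in \<open>auto simp: fps_sr_le_def\<close>)
    have "(\<Sum>i\<in>{1..r}. ?T i) = ?T j + (\<Sum>i\<in>{1..r} - {j}. ?T i)"
      using j by (simp add: sum.remove)
    also have "\<dots> = ?S" using j rest by (simp add: add.commute)
    finally show "(\<Sum>i\<in>{1..r}. ?T i) = ?S" .
  qed
qed

end
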